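(* Let $\mathcal I$ be an admissible ideal on $\mathbb N$. Then $\mathcal A\not\subseteq\mathfrak N^{\mathcal I}$: there is an Arbault set which does not belong to $\mathfrak N^{\mathcal I}$.
   Context: $\mathbb T=\mathbb R/\mathbb Z$ identified with $[0,1]$ (0 and 1 identified); $\|x\|$ is the distance from $x$ to the nearest integer. An ideal $\mathcal I$ on $\mathbb N$ is a nonempty family of subsets of $\mathbb N$ closed under finite unions and subsets with $\mathbb N\notin\mathcal I$; admissible means all singletons belong to it. $\mathcal A$: Arbault sets, i.e. sets $X\subseteq[0,1]$ with an increasing sequence of naturals $(a_n)$ such that $\|a_nx\|\to0$ for all $x\in X$. $\mathfrak N^{\mathcal I}$: the family of sets $X\subseteq[0,1]$ for which there exist an increasing sequence of naturals $(a_n)$ and a decreasing sequence of positive reals $(r_n)$ with $\sum_n r_n=\infty$, such that every $A\subseteq\mathbb N$ with $\sum_{n\in A}r_n<\infty$ belongs to $\mathcal I$, and such that $\sum_n r_n\|a_nx\|<\infty$ for all $x\in X$. *)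

theory Defs
  imports Complex_Main
begin

definition dint :: "real \<Rightarrow> real" where
  "dint x = \<bar>x - real_of_int (round x)\<bar>"

definition ideal_on_nat :: "nat set set \<Rightarrow> bool" where
  "ideal_on_nat I \<longleftrightarrow> I \<noteq> {} \<and>
     (\<forall>A\<in>I. \<forall>B\<in>I. A \<union> B \<in> I) \<and>
     (\<forall>A\<in>I. \<forall>B. B \<subseteq> A \<longrightarrow> B \<in> I) \<and>
     UNIV \<notin> I"

definition admissible_ideal :: "nat set set \<Rightarrow> bool" where
  "admissible_ideal I \<longleftrightarrow> ideal_on_nat I \<and> (\<forall>n. {n} \<in> I)"

definition arbault :: "real set \<Rightarrow> bool" where
  "arbault X \<longleftrightarrow> X \<subseteq> {0..1} \<and>
     (\<exists>a :: nat \<Rightarrow> nat. strict_mono a \<and>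
        (\<forall>x\<in>X. (\<lambda>n. dint (real (a n) * x)) \<longlonglongrightarrow> 0))"

definition N_ideal :: "nat set set \<Rightarrow> real set set" where
  "N_ideal I = {X. X \<subseteq> {0..1} \<and>
     (\<exists>(a :: nat \<Rightarrow> nat) (r :: nat \<Rightarrow> real).
        strict_mono a \<and> decseq r \<and> (\<forall>n. r n > 0) \<and> \<not> summable r \<and>
        (\<forall>A. summable (\<lambda>n. if n \<in> A then r n else 0) \<longrightarrow> A \<in> I) \<and>
        (\<forall>x\<in>X. summable (\<lambda>n. r n * dint (real (a n) * x))))}"

end

theory Submission
  imports Defs
begin


lemma dint_le: "dint x \<le> \<bar>x - real_of_int m\<bar>"
proof -
  let ?f = "x - real_of_int (round x)"
  have f: "\<bar>?f\<bar> \<le> 1/2" using of_int_round_abs_le[of x] by linarith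
  have "\<bar>x - real_of_int m\<bar> = \<bar>?f + real_of_int (round x - m)\<bar>" by simp
  moreover have "\<bar>?f\<bar> \<le> \<bar>?f + real_of_int (round x - m)\<bar>"
  proof (cases "round x - m = 0")
    case True then show ?thesis by simp
  next
    case False
    then have "1 \<le> \<bar>real_of_int (round x - m)\<bar>" by linarith
    then show ?thesis using f by linarith
  qed
  ultimately show ?thesis unfolding dint_def by simp
qed

lemma dint_nonneg: "0 \<le> dint x" by (simp add: dint_def)

lemma dint_le_abs: "dint x \<le> \<bar>x\<bar>" using dint_le[of x 0] by simp

lemma dint_triangle: "dint (x + y) \<le> dint x + dint y"
proof -
  have "dint (x + y) \<le> \<bar>x + y - real_of_int (round x + round y)\<bar>" by (rule dint_le)
  also have "\<dots> \<le> dint x + dint y" unfolding dint_def by simp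
  finally show ?thesis .
qed

lemma dint_minus: "dint (- x) = dint x"
proof -
  have "dint (-x) \<le> dint x" using dint_le[of "-x" "- round x"] by (simp add: dint_def)
  moreover have "dint x \<le> dint (-x)" using dint_le[of "x" "- round (-x)"] by (simp add: dint_def)
  ultimately show ?thesis by simp
qed

lemma dint_add_int: "dint (x + real_of_int m) = dint x"
proof -
  have "dint (x + real_of_int m) \<le> dint x" using dint_le[of "x + real_of_int m" "round x + m"] by (simp add: dint_def)
  moreover have "dint x \<le> dint (x + real_of_int m)" using dint_le[of "x" "round (x + real_of_int m) - m"] by (simp add: dint_def)
  ultimately show ?thesis by simp
qed

lemma dint_lip: "dint x \<le> dint y + \<bar>x - y\<bar>"
  using dint_triangle[of y "x - y"] dint_le_abs[of "x-y"] by simp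

lemma dint_small: assumes "0 \<le> x" "x \<le> 1/2" shows "dint x = x"
proof -
  have "x \<le> \<bar>x - real_of_int (round x)\<bar>"
  proof (cases "round x \<le> 0")
    case True then show ?thesis using assms by linarith
  next
    case False then have "1 \<le> real_of_int (round x)" by linarith
    then show ?thesis using assms by linarith
  qed
  then show ?thesis using dint_le_abs[of x] assms unfolding dint_def by simp
qed

lemma dint_pair: "dint (b * d) \<le> dint (b * (y + d)) + dint (b * y)"
  using dint_triangle[of "b*(y+d)" "- (b*y)"] dint_minus[of "b*y"] by (simp add: algebra_simps)



primrec Tseq :: "(nat \<Rightarrow> real \<Rightarrow> nat) \<Rightarrow> nat \<Rightarrow> nat" where
  "Tseq f 0 = 0"
| "Tseq f (Suc m) = max (f (Tseq f m) (32^m)) (Suc m)"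

lemma unbounded_partial:
  fixes r :: "nat \<Rightarrow> real"
  assumes r0: "\<And>n. 0 \<le> r n" and ns: "\<not> summable r"
  shows "\<exists>N. B < (\<Sum>n<N. r n)"
proof (rule ccontr)
  assume "\<not> ?thesis"
  then have "\<And>N. (\<Sum>n<N. r n) \<le> B" by (simp add: not_less)
  then have "summable r" by (intro summableI_nonneg_bounded[OF r0])
  with ns show False by simp
qed

lemma slow_weight:
  fixes r :: "nat \<Rightarrow> real" and \<psi> :: "nat \<Rightarrow> nat"
  assumes r0: "\<And>n. 0 \<le> r n" and ns: "\<not> summable r" and fin: "\<And>K. finite {n. \<psi> n < K}"
  shows "\<exists>W::nat\<Rightarrow>nat. mono W \<and> (\<forall>k. W k \<le> k) \<and> filterlim W at_top sequentially \<and>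
           \<not> summable (\<lambda>n. r n * (1/32)^(W (\<psi> n)))"
proof -
  have finb: "finite {n. T \<le> \<psi> n \<and> \<psi> n < T'}" for T T'
    by (rule finite_subset[OF _ fin[of T']]) auto
  have step: "\<exists>T'>T. B \<le> (\<Sum>n\<in>{n. T \<le> \<psi> n \<and> \<psi> n < T'}. r n)" for T B
  proof -
    obtain N where N: "(\<Sum>n\<in>{n. \<psi> n < T}. r n) + B < (\<Sum>n<N. r n)"
      using unbounded_partial[OF r0 ns] by blast
    define T' where "T' = Suc (Max (insert T (\<psi> ` {..<N})))"
    have TT: "T < T'" unfolding T'_def by (simp add: le_imp_less_Suc)
    have sub: "{..<N} \<subseteq> {n. \<psi> n < T} \<union> {n. T \<le> \<psi> n \<and> \<psi> n < T'}"
    proof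
      fix n assume "n \<in> {..<N}"
      then have "\<psi> n \<le> Max (insert T (\<psi> ` {..<N}))" by (intro Max_ge) auto
      then have "\<psi> n < T'" unfolding T'_def by simp
      then show "n \<in> {n. \<psi> n < T} \<union> {n. T \<le> \<psi> n \<and> \<psi> n < T'}" by auto
    qed
    have "(\<Sum>n<N. r n) \<le> (\<Sum>n\<in>{n. \<psi> n < T} \<union> {n. T \<le> \<psi> n \<and> \<psi> n < T'}. r n)"
      by (rule sum_mono2) (use sub fin finb r0 in auto)
    also have "\<dots> = (\<Sum>n\<in>{n. \<psi> n < T}. r n) + (\<Sum>n\<in>{n. T \<le> \<psi> n \<and> \<psi> n < T'}. r n)"
      by (rule sum.union_disjoint) (use fin finb in auto)
    finally show ?thesis using N TT by force
  qed
  then obtain f where f: "\<And>T B. T < f T B \<and> B \<le> (\<Sum>n\<in>{n. T \<le> \<psi> n \<and> \<psi> n < f T B}. r n)"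
    by metis
  define T where "T = Tseq f"
  have Tsuc: "T m < T (Suc m)" for m using f[of "T m" "32^m"] by (auto simp: T_def less_max_iff_disj)
  have Tsm: "strict_mono T" using Tsuc by (simp add: strict_mono_Suc_iff)
  have Tmono: "m \<le> m' \<Longrightarrow> T m \<le> T m'" for m m' using Tsm by (simp add: strict_mono_less_eq)
  have Tge: "Suc m \<le> T (Suc m)" for m by (simp add: T_def)
  have block: "32^m \<le> (\<Sum>n\<in>{n. T m \<le> \<psi> n \<and> \<psi> n < T (Suc m)}. r n)" for m
  proof -
    have "32^m \<le> (\<Sum>n\<in>{n. T m \<le> \<psi> n \<and> \<psi> n < f (T m) (32^m)}. r n)" using f by blast
    also have "\<dots> \<le> (\<Sum>n\<in>{n. T m \<le> \<psi> n \<and> \<psi> n < T (Suc m)}. r n)"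
      by (rule sum_mono2[OF finb]) (auto simp: T_def r0)
    finally show ?thesis .
  qed
  define W where "W k = (LEAST m. k < T (Suc m))" for k
  have Wex: "k < T (Suc (W k))" for k
    unfolding W_def by (rule LeastI[of _ k]) (use Tge[of k] in auto)
  have Wle: "k < T (Suc m) \<Longrightarrow> W k \<le> m" for k m unfolding W_def by (rule Least_le)
  have Wblock: "T m \<le> k \<Longrightarrow> k < T (Suc m) \<Longrightarrow> W k = m" for k m
  proof -
    assume a: "T m \<le> k" "k < T (Suc m)"
    have "W k \<le> m" using Wle a by blast
    moreover have "\<not> W k < m"
    proof
      assume "W k < m"
      then have "T (Suc (W k)) \<le> T m" by (intro Tmono) simp
      with Wex[of k] a show False by simp
    qed
    ultimately show ?thesis by simp
  qed
  have Wmono: "mono W"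
  proof (rule monoI)
    fix k k' :: nat assume "k \<le> k'"
    with Wex[of k'] have "k < T (Suc (W k'))" by simp
    then show "W k \<le> W k'" by (rule Wle)
  qed
  have Wk: "W k \<le> k" for k using Tge[of k] by (intro Wle) simp
  have Wge: "T m \<le> k \<Longrightarrow> m \<le> W k" for m k
  proof (rule ccontr)
    assume a: "T m \<le> k" "\<not> m \<le> W k"
    then have "T (Suc (W k)) \<le> T m" by (intro Tmono) simp
    with Wex[of k] a show False by simp
  qed
  have Wlim: "filterlim W at_top sequentially"
    unfolding filterlim_at_top eventually_sequentially using Wge by blast
  define g where "g n = r n * (1/32::real)^(W (\<psi> n))" for n
  have g0: "0 \<le> g n" for n using r0 by (simp add: g_def)
  have "\<not> summable g"
  proof
    assume sg: "summable g"
    have bound: "real M \<le> suminf g" for M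
    proof -
      have "(\<Sum>n\<in>{n. \<psi> n < T M}. g n) = (\<Sum>m\<in>{..<M}. \<Sum>n\<in>{n. n \<in> {n. \<psi> n < T M} \<and> W (\<psi> n) = m}. g n)"
      proof (rule sum.group[symmetric, OF fin finite_lessThan])
        show "(\<lambda>n. W (\<psi> n)) ` {n. \<psi> n < T M} \<subseteq> {..<M}"
        proof
          fix m assume "m \<in> (\<lambda>n. W (\<psi> n)) ` {n. \<psi> n < T M}"
          then obtain n where n: "\<psi> n < T M" "m = W (\<psi> n)" by blast
          have "W (\<psi> n) < M"
          proof (cases M)
            case 0 then show ?thesis using n by (simp add: T_def)
          next
            case (Suc m') then show ?thesis using Wle[of "\<psi> n" m'] n by simp
          qed
          then show "m \<in> {..<M}" using n by simp
        qed
      qed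
      also have "\<dots> = (\<Sum>m<M. \<Sum>n\<in>{n. T m \<le> \<psi> n \<and> \<psi> n < T (Suc m)}. g n)"
      proof (rule sum.cong[OF refl])
        fix m assume m: "m \<in> {..<M}"
        have "{n. n \<in> {n. \<psi> n < T M} \<and> W (\<psi> n) = m} = {n. T m \<le> \<psi> n \<and> \<psi> n < T (Suc m)}"
        proof (intro set_eqI iffI)
          fix n assume "n \<in> {n. n \<in> {n. \<psi> n < T M} \<and> W (\<psi> n) = m}"
          then have a: "\<psi> n < T M" "W (\<psi> n) = m" by auto
          have "T m \<le> \<psi> n"
          proof (rule ccontr)
            assume c: "\<not> T m \<le> \<psi> n"
            show False
            proof (cases m)
              case 0 then show False using c by (simp add: T_def)
            next
              case (Suc m'') then show False using Wle[of "\<psi> n" m''] c a by simp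
            qed
          qed
          then show "n \<in> {n. T m \<le> \<psi> n \<and> \<psi> n < T (Suc m)}" using Wex[of "\<psi> n"] a by simp
        next
          fix n assume "n \<in> {n. T m \<le> \<psi> n \<and> \<psi> n < T (Suc m)}"
          then have a: "T m \<le> \<psi> n" "\<psi> n < T (Suc m)" by auto
          have "T (Suc m) \<le> T M" using m by (intro Tmono) simp
          then show "n \<in> {n. n \<in> {n. \<psi> n < T M} \<and> W (\<psi> n) = m}" using a Wblock[OF a] by simp
        qed
        then show "(\<Sum>n\<in>{n. n \<in> {n. \<psi> n < T M} \<and> W (\<psi> n) = m}. g n) = (\<Sum>n\<in>{n. T m \<le> \<psi> n \<and> \<psi> n < T (Suc m)}. g n)"
          by simp
      qed
      also have "\<dots> \<ge> (\<Sum>m<M. (1::real))"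
      proof (rule sum_mono)
        fix m assume "m \<in> {..<M}"
        have "(\<Sum>n\<in>{n. T m \<le> \<psi> n \<and> \<psi> n < T (Suc m)}. g n) = (1/32)^m * (\<Sum>n\<in>{n. T m \<le> \<psi> n \<and> \<psi> n < T (Suc m)}. r n)"
          unfolding sum_distrib_left g_def using Wblock by (intro sum.cong) auto
        also have "\<dots> \<ge> (1/32)^m * 32^m" using block[of m] by (intro mult_left_mono) auto
        finally show "1 \<le> (\<Sum>n\<in>{n. T m \<le> \<psi> n \<and> \<psi> n < T (Suc m)}. g n)"
          by (simp add: power_one_over)
      qed
      finally have "real M \<le> (\<Sum>n\<in>{n. \<psi> n < T M}. g n)" by simp
      also have "\<dots> \<le> suminf g" by (rule sum_le_suminf[OF sg fin]) (simp add: g0)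
      finally show ?thesis .
    qed
    obtain M :: nat where "suminf g < real M" using reals_Archimedean2 by blast
    with bound[of M] show False by simp
  qed
  then show ?thesis using Wmono Wk Wlim unfolding g_def by blast
qed



fun zseq :: "(nat \<Rightarrow> real \<Rightarrow> real) \<Rightarrow> nat set \<Rightarrow> nat \<Rightarrow> real" where
  "zseq F Js 0 = 0"
| "zseq F Js (Suc i) = zseq F Js i +
     (if Suc i \<in> Js \<and> F (Suc i) (zseq F Js i) \<le> F (Suc i) (zseq F Js i + (1/32)^Suc i)
      then (1/32)^Suc i else 0)"

definition xlim :: "(nat \<Rightarrow> real \<Rightarrow> real) \<Rightarrow> nat set \<Rightarrow> real" where
  "xlim F Js = suminf (\<lambda>i. zseq F Js (Suc i) - zseq F Js i)"

lemma zinc: "0 \<le> zseq F Js (Suc i) - zseq F Js i" "zseq F Js (Suc i) - zseq F Js i \<le> (1/32)^Suc i"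
  by auto

lemma zint: "\<exists>m::int. zseq F Js j * 32^j = of_int m"
proof (induction j)
  case 0 then show ?case by (auto intro: exI[of _ 0])
next
  case (Suc i)
  then obtain m :: int where m: "zseq F Js i * 32^i = of_int m" by blast
  show ?case
  proof (cases "Suc i \<in> Js \<and> F (Suc i) (zseq F Js i) \<le> F (Suc i) (zseq F Js i + (1/32)^Suc i)")
    case True
    then have "zseq F Js (Suc i) * 32^Suc i = 32 * (zseq F Js i * 32^i) + 1"
      by (simp add: algebra_simps power_one_over)
    then show ?thesis using m by (intro exI[of _ "32*m+1"]) simp
  next
    case False
    then have "zseq F Js (Suc i) * 32^Suc i = 32 * (zseq F Js i * 32^i)"
      by (simp add: algebra_simps)
    then show ?thesis using m by (intro exI[of _ "32*m"]) simp
  qed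
qed

lemma zF: assumes "Suc i \<in> Js"
  shows "F (Suc i) (zseq F Js i) + F (Suc i) (zseq F Js i + (1/32)^Suc i) \<le> 2 * F (Suc i) (zseq F Js (Suc i))"
  using assms by (cases "F (Suc i) (zseq F Js i) \<le> F (Suc i) (zseq F Js i + (1/32)^Suc i)") auto

lemma zwin: assumes "\<And>j. k < j \<Longrightarrow> j \<le> k + w \<Longrightarrow> j \<notin> Js"
  shows "zseq F Js (k + w) = zseq F Js k"
  using assms
proof (induction w)
  case 0 then show ?case by simp
next
  case (Suc w)
  then have "zseq F Js (k + w) = zseq F Js k" by simp
  moreover have "Suc (k + w) \<notin> Js" using Suc.prems by simp
  ultimately show ?case by simp
qed

lemma ztail: "0 \<le> xlim F Js - zseq F Js j \<and> xlim F Js - zseq F Js j \<le> (1/32)^j / 31"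
proof -
  define d where "d i = zseq F Js (Suc i) - zseq F Js i" for i
  have d0: "0 \<le> d i" and d1: "d i \<le> (1/32)^Suc i" for i using zinc[of F Js i] by (auto simp: d_def)
  have geo: "(\<lambda>n. (1/32::real)^Suc (n + j)) sums ((1/32)^Suc j * (1 / (1 - 1/32)))"
    using sums_mult[OF geometric_sums[of "1/32::real"], of "(1/32)^Suc j"]
    by (simp add: power_add mult_ac)
  have sg: "summable (\<lambda>i. (1/32::real)^Suc i)" by (simp add: summable_geometric)
  have sd: "summable d" by (rule summable_comparison_test'[OF sg, of 0]) (use d0 d1 in auto)
  have sdj: "summable (\<lambda>n. d (n + j))" using sd by (simp add: summable_iff_shift)
  have "xlim F Js = (\<Sum>n. d (n + j)) + (\<Sum>i<j. d i)"
    unfolding xlim_def d_def[symmetric] by (rule suminf_split_initial_segment[OF sd])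
  also have "(\<Sum>i<j. d i) = zseq F Js j" unfolding d_def by (subst sum_lessThan_telescope) simp
  finally have eq: "xlim F Js - zseq F Js j = (\<Sum>n. d (n + j))" by simp
  have "(\<Sum>n. d (n + j)) \<le> (\<Sum>n. (1/32::real)^Suc (n + j))"
    by (rule suminf_le[OF _ sdj sums_summable[OF geo]]) (use d1 in auto)
  also have "\<dots> = (1/32)^Suc j * (1 / (1 - 1/32))" using geo by (simp add: sums_iff)
  also have "\<dots> = (1/32)^j / 31" by simp
  finally show ?thesis using eq suminf_nonneg[OF sdj] d0 by simp
qed



lemma sq_lemma:
  fixes W :: "nat \<Rightarrow> nat"
  assumes Wm: "mono W" and Wk: "\<And>k. W k \<le> k"
  defines "Js \<equiv> {j. 1 \<le> j \<and> (\<forall>k. \<not> (k*k < j \<and> j \<le> k*k + W k))}"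
  assumes j0: "1 \<le> j0"
  shows "\<exists>j\<in>Js. j0 \<le> j \<and> j \<le> j0 + W j0"
proof (cases "j0 \<in> Js")
  case True then show ?thesis by auto
next
  case False
  then obtain k where k: "k*k < j0" "j0 \<le> k*k + W k" using j0 unfolding Js_def by auto
  define j where "j = k*k + W k + 1"
  have kk: "k \<le> k*k" by (cases k) auto
  have "W k \<le> W j0" using kk k(1) by (intro monoD[OF Wm]) linarith
  then have jle: "j \<le> j0 + W j0" using k unfolding j_def by simp
  have "j \<in> Js" unfolding Js_def
  proof (intro CollectI conjI allI notI)
    show "1 \<le> j" by (simp add: j_def)
  next
    fix k' assume a: "k'*k' < j \<and> j \<le> k'*k' + W k'"
    consider "k' < k" | "k' = k" | "k < k'" by linarith
    then show False
    proof cases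
      case 1
      then have "(k'+1)*(k'+1) \<le> k*k" using mult_le_mono[of "k'+1" k "k'+1" k] by simp
      moreover have "W k' \<le> k'" by (rule Wk)
      ultimately show False using a unfolding j_def by (simp add: algebra_simps)
    next
      case 2 then show False using a by (simp add: j_def)
    next
      case 3
      then have "(k+1)*(k+1) \<le> k'*k'" using mult_le_mono[of "k+1" k' "k+1" k'] by simp
      moreover have "W k \<le> k" by (rule Wk)
      ultimately show False using a unfolding j_def by (simp add: algebra_simps)
    qed
  qed
  moreover have "j0 \<le> j" using k unfolding j_def by simp
  ultimately show ?thesis using jle by blast
qed



lemma key:
  fixes b :: "nat \<Rightarrow> nat" and r :: "nat \<Rightarrow> real"
  assumes bm: "strict_mono b" and r0: "\<And>n. 0 \<le> r n" and ns: "\<not> summable r"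
  shows "\<exists>x. 0 \<le> x \<and> x \<le> 1 \<and> (\<lambda>k. dint (real (32^(k*k)) * x)) \<longlonglongrightarrow> 0 \<and>
             \<not> summable (\<lambda>n. r n * dint (real (b n) * x))"
proof -
  have bge: "n \<le> b n" for n using seq_suble[OF bm] .
  define jp where "jp n = (LEAST j. 2 * b n \<le> (32::nat)^j)" for n
  have jpex: "2 * b n \<le> (32::nat)^(2 * b n)" for n
  proof -
    have "2 * b n < 2^(2 * b n)" by (rule less_exp)
    also have "(2::nat)^(2 * b n) \<le> 32^(2 * b n)" by (rule power_mono) auto
    finally show ?thesis by simp
  qed
  have jp1: "2 * b n \<le> (32::nat)^(jp n)" for n unfolding jp_def by (rule LeastI[of "\<lambda>j. 2 * b n \<le> (32::nat)^j", OF jpex])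
  have fin: "finite {n. jp n < K}" for K
  proof (rule finite_subset[OF _ finite_lessThan[of "32^K"]])
    show "{n. jp n < K} \<subseteq> {..<32^K}"
    proof
      fix n assume "n \<in> {n. jp n < K}"
      then have "(32::nat)^(jp n) < 32^K" by (simp add: power_strict_increasing)
      with jp1[of n] bge[of n] have "n < 32^K" by linarith
      then show "n \<in> {..<32^K}" by simp
    qed
  qed
  obtain W :: "nat \<Rightarrow> nat" where Wm: "mono W" and Wk: "\<And>k. W k \<le> k"
    and Wlim: "filterlim W at_top sequentially"
    and Wns: "\<not> summable (\<lambda>n. r n * (1/32)^(W (jp n)))"
    using slow_weight[OF r0 ns fin] by blast
  define Js where "Js = {j. 1 \<le> j \<and> (\<forall>k. \<not> (k*k < j \<and> j \<le> k*k + W k))}"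
  have claim: "1 \<le> j0 \<Longrightarrow> \<exists>j\<in>Js. j0 \<le> j \<and> j \<le> j0 + W j0" for j0
    unfolding Js_def by (rule sq_lemma[OF Wm Wk])
  define J where "J n = (LEAST j. j \<in> Js \<and> 2 * b n \<le> (32::nat)^j)" for n
  have Jex: "\<exists>j. j \<in> Js \<and> 2 * b n \<le> (32::nat)^j" for n
  proof -
    obtain j where j: "j \<in> Js" "max 1 (jp n) \<le> j" using claim[of "max 1 (jp n)"] by auto
    have "(32::nat)^(jp n) \<le> 32^j" using j by (intro power_increasing) auto
    then have "2 * b n \<le> (32::nat)^j" using jp1[of n] by (rule order.trans[rotated])
    then show ?thesis using j by (intro exI[of _ j]) auto
  qed
  have JJs: "J n \<in> Js" and Jb: "2 * b n \<le> (32::nat)^(J n)" for n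
    using LeastI_ex[OF Jex[of n]] unfolding J_def by auto
  have J1: "1 \<le> J n" for n using JJs[of n] by (simp add: Js_def)
  define G where "G j = {n. J n = j}" for j
  have finG: "finite (G j)" for j
  proof (rule finite_subset[OF _ finite_atMost[of "32^j"]])
    show "G j \<subseteq> {..32^j}"
    proof
      fix n assume "n \<in> G j"
      then have "J n = j" by (simp add: G_def)
      with Jb[of n] bge[of n] show "n \<in> {..32^j}" by simp
    qed
  qed
  define F where "F j y = (\<Sum>n\<in>G j. r n * dint (real (b n) * y))" for j y
  define z where "z = zseq F Js"
  define x where "x = xlim F Js"
  have tail: "0 \<le> x - z j" "x - z j \<le> (1/32)^j / 31" for j
    using ztail[of F Js j] unfolding x_def z_def by auto
  have x01: "0 \<le> x" "x \<le> 1" using tail[of 0] by (auto simp: z_def)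
  have dbound: "dint (real (32^(k*k)) * x) \<le> (1/32)^(W k) / 31" for k
  proof -
    have win: "z (k*k + W k) = z (k*k)" unfolding z_def
      by (rule zwin) (auto simp: Js_def)
    obtain m :: int where m: "z (k*k) * 32^(k*k) = of_int m" using zint[of F Js "k*k"] unfolding z_def by blast
    have "real (32^(k*k)) * x = 32^(k*k) * (x - z (k*k + W k)) + of_int m"
      using win m by (simp add: algebra_simps)
    then have "dint (real (32^(k*k)) * x) = dint (32^(k*k) * (x - z (k*k + W k)))"
      by (simp add: dint_add_int)
    also have "\<dots> \<le> \<bar>32^(k*k) * (x - z (k*k + W k))\<bar>" by (rule dint_le_abs)
    also have "\<dots> = 32^(k*k) * (x - z (k*k + W k))" using tail[of "k*k + W k"] by simp
    also have "\<dots> \<le> 32^(k*k) * ((1/32)^(k*k + W k) / 31)"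
      using tail[of "k*k + W k"] by (intro mult_left_mono) auto
    also have "\<dots> = (1/32)^(W k) / 31" by (simp add: power_add power_one_over)
    finally show ?thesis .
  qed
  have arb: "(\<lambda>k. dint (real (32^(k*k)) * x)) \<longlonglongrightarrow> 0"
  proof (rule tendsto_sandwich[of "\<lambda>k. 0" _ _ "\<lambda>k. (1/32)^(W k) / 31"])
    show "\<forall>\<^sub>F k in sequentially. 0 \<le> dint (real (32^(k*k)) * x)" by (simp add: dint_nonneg)
    show "\<forall>\<^sub>F k in sequentially. dint (real (32^(k*k)) * x) \<le> (1/32)^(W k) / 31" using dbound by simp
    show "(\<lambda>k. 0::real) \<longlonglongrightarrow> 0" by simp
    have "(\<lambda>k. (1/32::real)^(W k)) \<longlonglongrightarrow> 0"
      by (rule filterlim_compose[OF LIMSEQ_power_zero Wlim]) simp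
    then show "(\<lambda>k. (1/32::real)^(W k) / 31) \<longlonglongrightarrow> 0" by (intro tendsto_divide_zero)
  qed
  have nsum: "\<not> summable (\<lambda>n. r n * dint (real (b n) * x))"
  proof
    define s where "s n = r n * dint (real (b n) * x)" for n
    assume "summable (\<lambda>n. r n * dint (real (b n) * x))"
    then have ss: "summable s" by (simp add: s_def[abs_def])
    have s0: "0 \<le> s n" for n using r0 by (simp add: s_def dint_nonneg)
    define h where "h n = r n * real (b n) * (1/32)^(J n)" for n
    have h0: "0 \<le> h n" for n using r0 by (simp add: h_def)
    have grp: "(\<Sum>n\<in>G j. h n) \<le> 4 * (\<Sum>n\<in>G j. s n)" for j
    proof (cases "G j = {}")
      case True then show ?thesis by simp
    next
      case False
      then obtain n0 where "J n0 = j" by (auto simp: G_def)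
      then have jJs: "j \<in> Js" and "1 \<le> j" using JJs J1 by auto
      then obtain i where ji: "j = Suc i" by (cases j) auto
      define \<delta> where "\<delta> = (1/32::real)^j"
      have small: "0 \<le> real (b n) * \<delta>" "real (b n) * \<delta> \<le> 1/2" if "n \<in> G j" for n
      proof -
        have "J n = j" using that by (simp add: G_def)
        then have "2 * real (b n) \<le> 32^j" using Jb[of n] by (metis of_nat_le_iff of_nat_mult of_nat_numeral of_nat_power)
        then show "0 \<le> real (b n) * \<delta>" "real (b n) * \<delta> \<le> 1/2"
          by (auto simp: \<delta>_def power_one_over field_simps)
      qed
      have hG: "h n = r n * dint (real (b n) * \<delta>)" if "n \<in> G j" for n
        using that small[OF that] by (simp add: h_def G_def \<delta>_def dint_small)
      have hJ: "h n = r n * real (b n) * \<delta>" if "n \<in> G j" for n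
        using that by (simp add: h_def G_def \<delta>_def)
      have "(\<Sum>n\<in>G j. h n) \<le> (\<Sum>n\<in>G j. r n * dint (real (b n) * (z i + \<delta>)) + r n * dint (real (b n) * z i))"
      proof (rule sum_mono)
        fix n assume n: "n \<in> G j"
        have "r n * dint (real (b n) * \<delta>) \<le> r n * (dint (real (b n) * (z i + \<delta>)) + dint (real (b n) * z i))"
          by (intro mult_left_mono dint_pair r0)
        then show "h n \<le> r n * dint (real (b n) * (z i + \<delta>)) + r n * dint (real (b n) * z i)"
          using hG[OF n] by (simp add: algebra_simps)
      qed
      also have "\<dots> = F j (z i) + F j (z i + \<delta>)" by (simp add: F_def sum.distrib)
      also have "\<dots> \<le> 2 * F j (z j)" using zF[of i Js F] jJs unfolding ji z_def \<delta>_def by simp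
      finally have A: "(\<Sum>n\<in>G j. h n) \<le> 2 * F j (z j)" .
      have "F j (z j) \<le> (\<Sum>n\<in>G j. s n + h n / 31)" unfolding F_def
      proof (rule sum_mono)
        fix n assume n: "n \<in> G j"
        have "dint (real (b n) * z j) \<le> dint (real (b n) * x) + \<bar>real (b n) * z j - real (b n) * x\<bar>"
          by (rule dint_lip)
        also have "\<bar>real (b n) * z j - real (b n) * x\<bar> = real (b n) * (x - z j)"
        proof -
          have "real (b n) * z j - real (b n) * x = - (real (b n) * (x - z j))" by (simp add: algebra_simps)
          moreover have "0 \<le> real (b n) * (x - z j)" using tail[of j] by simp
          ultimately show ?thesis by simp
        qed
        also have "\<dots> \<le> real (b n) * (\<delta> / 31)" using tail[of j] by (intro mult_left_mono) (auto simp: \<delta>_def)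
        finally have "dint (real (b n) * z j) \<le> dint (real (b n) * x) + real (b n) * (\<delta> / 31)" by simp
        then have "r n * dint (real (b n) * z j) \<le> r n * (dint (real (b n) * x) + real (b n) * (\<delta> / 31))"
          by (intro mult_left_mono r0)
        then show "r n * dint (real (b n) * z j) \<le> s n + h n / 31"
          using hJ[OF n] by (simp add: s_def algebra_simps)
      qed
      also have "\<dots> = (\<Sum>n\<in>G j. s n) + (\<Sum>n\<in>G j. h n) / 31" by (simp add: sum.distrib sum_divide_distrib)
      finally have B: "F j (z j) \<le> (\<Sum>n\<in>G j. s n) + (\<Sum>n\<in>G j. h n) / 31" .
      have "0 \<le> (\<Sum>n\<in>G j. s n)" by (intro sum_nonneg s0)
      with A B show ?thesis by linarith
    qed
    have part: "(\<Sum>n<N. h n) \<le> 4 * suminf s" for N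
    proof -
      define M where "M = Max (insert 0 (J ` {..<N}))"
      define A where "A = {n. J n \<le> M}"
      have finA: "finite A"
      proof (rule finite_subset[OF _ finite_atMost[of "32^M"]])
        show "A \<subseteq> {..32^M}"
        proof
          fix n assume "n \<in> A"
          then have "(32::nat)^(J n) \<le> 32^M" unfolding A_def by (intro power_increasing) auto
          with Jb[of n] bge[of n] have "n \<le> 32^M" by linarith
          then show "n \<in> {..32^M}" by simp
        qed
      qed
      have subA: "{..<N} \<subseteq> A" unfolding A_def M_def by (auto intro: Max_ge)
      have "(\<Sum>n<N. h n) \<le> (\<Sum>n\<in>A. h n)" by (rule sum_mono2[OF finA subA]) (simp add: h0)
      also have "\<dots> = (\<Sum>j\<in>{..M}. \<Sum>n\<in>{n. n \<in> A \<and> J n = j}. h n)"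
        by (rule sum.group[symmetric, OF finA finite_atMost]) (auto simp: A_def)
      also have "\<dots> = (\<Sum>j\<in>{..M}. \<Sum>n\<in>G j. h n)"
        by (intro sum.cong refl) (auto simp: A_def G_def)
      also have "\<dots> \<le> (\<Sum>j\<in>{..M}. 4 * (\<Sum>n\<in>G j. s n))" by (intro sum_mono grp)
      also have "\<dots> = 4 * (\<Sum>j\<in>{..M}. \<Sum>n\<in>{n. n \<in> A \<and> J n = j}. s n)"
        by (simp add: sum_distrib_left) (intro sum.cong refl, auto simp: A_def G_def)
      also have "(\<Sum>j\<in>{..M}. \<Sum>n\<in>{n. n \<in> A \<and> J n = j}. s n) = (\<Sum>n\<in>A. s n)"
        by (rule sum.group[OF finA finite_atMost]) (auto simp: A_def)
      also have "(\<Sum>n\<in>A. s n) \<le> suminf s" by (rule sum_le_suminf[OF ss finA]) (simp add: s0)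
      finally show ?thesis by simp
    qed
    have hs: "summable h" by (rule summableI_nonneg_bounded[OF h0 part])
    have low: "norm (r n * (1/32)^(W (jp n))) \<le> 64 * h n" if "1 \<le> n" for n
    proof -
      have b1: "1 \<le> b n" using bge[of n] that by simp
      have jp0: "1 \<le> jp n"
      proof (rule ccontr)
        assume "\<not> 1 \<le> jp n"
        then have "jp n = 0" by simp
        with jp1[of n] b1 show False by simp
      qed
      have "\<not> 2 * b n \<le> (32::nat)^(jp n - 1)"
        unfolding jp_def by (rule not_less_Least) (use jp0 in \<open>simp add: jp_def\<close>)
      then have lt: "(32::nat)^(jp n - 1) < 2 * b n" by simp
      have "(32::nat)^(jp n) = 32 * 32^(jp n - 1)" using jp0 by (metis Suc_pred' less_eq_Suc_le One_nat_def power_Suc)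
      then have "(32::nat)^(jp n) < 64 * b n" using lt by simp
      then have c1: "(32::real)^(jp n) < 64 * real (b n)"
        by (metis of_nat_less_iff of_nat_mult of_nat_numeral of_nat_power)
      obtain j where j: "j \<in> Js" "jp n \<le> j" "j \<le> jp n + W (jp n)" using claim[OF jp0] by blast
      have "(32::nat)^(jp n) \<le> 32^j" using j by (intro power_increasing) auto
      then have "2 * b n \<le> (32::nat)^j" using jp1[of n] by (rule order.trans[rotated])
      then have "J n \<le> j" unfolding J_def using j by (intro Least_le) auto
      then have Jle: "J n \<le> jp n + W (jp n)" using j by simp
      have "(1/32::real)^(jp n + W (jp n)) \<le> (1/32)^(J n)" using Jle by (intro power_decreasing) auto
      then have "r n * real (b n) * (1/32)^(jp n + W (jp n)) \<le> h n" unfolding h_def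
        using r0[of n] by (intro mult_left_mono) auto
      moreover have "r n * (1/32)^(W (jp n)) \<le> 64 * (r n * real (b n) * (1/32)^(jp n + W (jp n)))"
      proof -
        have "(1/32::real)^(W (jp n)) \<le> 64 * real (b n) * (1/32)^(jp n + W (jp n))"
          using c1 by (simp add: power_add power_one_over field_simps)
        then show ?thesis using r0[of n] by (metis mult_left_mono mult.assoc mult.left_commute)
      qed
      ultimately show ?thesis using r0[of n] by simp
    qed
    have "summable (\<lambda>n. r n * (1/32)^(W (jp n)))"
      by (rule summable_comparison_test'[of "\<lambda>n. 64 * h n" 1]) (use hs low in auto)
    with Wns show False by simp
  qed
  show ?thesis using x01 arb nsum by blast
qed


theorem corollary3p15:
  fixes I :: "nat set set"
  assumes "admissible_ideal I"
  shows "\<exists>X. arbault X \<and> X \<notin> N_ideal I"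
proof -
  define X where "X = {x. 0 \<le> x \<and> x \<le> 1 \<and> (\<lambda>k. dint (real (32^(k*k)) * x)) \<longlonglongrightarrow> 0}"
  have sm: "strict_mono (\<lambda>k. (32::nat)^(k*k))"
    unfolding strict_mono_Suc_iff by (intro allI power_strict_increasing) auto
  have "arbault X" unfolding arbault_def
  proof (intro conjI)
    show "X \<subseteq> {0..1}" by (auto simp: X_def)
    show "\<exists>a. strict_mono a \<and> (\<forall>x\<in>X. (\<lambda>n. dint (real (a n) * x)) \<longlonglongrightarrow> 0)"
      by (rule exI[of _ "\<lambda>k. (32::nat)^(k*k)"]) (use sm in \<open>auto simp: X_def\<close>)
  qed
  moreover have "X \<notin> N_ideal I"
  proof
    assume "X \<in> N_ideal I"
    then obtain a :: "nat \<Rightarrow> nat" and r :: "nat \<Rightarrow> real" where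
      am: "strict_mono a" and rp: "\<forall>n. r n > 0" and ns: "\<not> summable r"
      and su: "\<forall>x\<in>X. summable (\<lambda>n. r n * dint (real (a n) * x))"
      unfolding N_ideal_def by blast
    have r0: "\<And>n. 0 \<le> r n" using rp by (simp add: less_imp_le)
    obtain x where x: "0 \<le> x" "x \<le> 1" "(\<lambda>k. dint (real (32^(k*k)) * x)) \<longlonglongrightarrow> 0"
      and nx: "\<not> summable (\<lambda>n. r n * dint (real (a n) * x))"
      using key[OF am r0 ns] by blast
    have "x \<in> X" using x by (simp add: X_def)
    with su nx show False by blast
  qed
  ultimately show ?thesis by blast
qed

end
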